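(* Let $a\geq 3$ and $m\geq 2a^2-a+2$ be integers, and suppose $[C(m,a)]$ is colored with red and blue so that there is no monochromatic solution of $L(m,a)$ in $[C(m,a)]$, with both $a-2$ and $a-1$ red. Then $m-1$, $m-2$, $m-3$ are blue and $a$ is red.
   Context: For integers $m\geq 3$, $a\geq 1$, $L(m,a)$ denotes the equation $x_1+x_2+\cdots+x_{m-1}=a x_m$. For a positive integer $n$, $[n]=\{1,\dots,n\}$. A solution of $L(m,a)$ in $[n]$ is an $m$-tuple $(x_1,\dots,x_m)\in[n]^m$ (entries not necessarily distinct) satisfying the equation; given a 2-coloring of $[n]$, it is monochromatic if all $x_i$ have the same color. $C(m,a)$ denotes $\left\lceil \frac{m-1}{a}\left\lceil \frac{m-1}{a}\right\rceil\right\rceil$. *)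

theory Defs
  imports Complex_Main
begin

definition ceil_div :: "nat \<Rightarrow> nat \<Rightarrow> nat" where
  "ceil_div p b = nat \<lceil>(of_nat p :: real) / of_nat b\<rceil>"

definition C :: "nat \<Rightarrow> nat \<Rightarrow> nat" where
  "C m a = nat \<lceil>(of_nat (m - 1) :: real) / of_nat a * of_nat (ceil_div (m - 1) a)\<rceil>"

text \<open>A solution of L(m,a) in [n]: an m-tuple (x_1,...,x_m), encoded as
  x :: nat => nat on indices 1..m, with x_1+...+x_(m-1) = a x_m.\<close>
definition is_solution :: "nat \<Rightarrow> nat \<Rightarrow> nat \<Rightarrow> (nat \<Rightarrow> nat) \<Rightarrow> bool" where
  "is_solution m a n x \<longleftrightarrow> (\<forall>i\<in>{1..m}. x i \<in> {1..n}) \<and>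
     (\<Sum>i=1..m-1. x i) = a * x m"

text \<open>A 2-coloring is a predicate col :: nat => bool (True = red, False = blue);
  a solution is monochromatic if all its entries get the same color.\<close>
definition monochromatic :: "(nat \<Rightarrow> bool) \<Rightarrow> nat \<Rightarrow> (nat \<Rightarrow> nat) \<Rightarrow> bool" where
  "monochromatic col m x \<longleftrightarrow> (\<forall>i\<in>{1..m}. \<forall>j\<in>{1..m}. col (x i) = col (x j))"

end

theory Submission
  imports Defs
begin

lemma sum3:
  fixes u v w :: nat
  assumes "p \<le> q"
  shows "(\<Sum>i=1..N. if i \<le> p then u else if i \<le> q then v else w)
     = min p N * u + (min q N - min p N) * v + (N - min q N) * w"
  using assms
proof (induction N)
  case 0 then show ?case by simp
next
  case (Suc N)
  have "(\<Sum>i=1..Suc N. if i \<le> p then u else if i \<le> q then v else w)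
     = (\<Sum>i=1..N. if i \<le> p then u else if i \<le> q then v else w)
       + (if Suc N \<le> p then u else if Suc N \<le> q then v else w)"
    by simp
  also have "\<dots> = min p N * u + (min q N - min p N) * v + (N - min q N) * w
       + (if Suc N \<le> p then u else if Suc N \<le> q then v else w)"
    using Suc by simp
  also have "\<dots> = min p (Suc N) * u + (min q (Suc N) - min p (Suc N)) * v + (Suc N - min q (Suc N)) * w"
  proof (cases "Suc N \<le> p")
    case True
    then show ?thesis using Suc.prems by (simp add: min_def)
  next
    case F1: False
    show ?thesis
    proof (cases "Suc N \<le> q")
      case True
      then have "min p N = p" "min p (Suc N) = p" "min q N = N" "min q (Suc N) = Suc N"
        using F1 by auto
      have "p \<le> N" using F1 by simp
      then obtain j where "N = p + j" using le_iff_add by blast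
      then show ?thesis using F1 True \<open>min p N = p\<close> \<open>min p (Suc N) = p\<close> \<open>min q N = N\<close> \<open>min q (Suc N) = Suc N\<close>
        by (simp add: algebra_simps)
    next
      case False
      then have "min p N = p" "min p (Suc N) = p" "min q N = q" "min q (Suc N) = q"
        using F1 by auto
      have "q \<le> N" using False by simp
      then obtain j where "N = q + j" using le_iff_add by blast
      then show ?thesis using F1 False \<open>min p N = p\<close> \<open>min p (Suc N) = p\<close> \<open>min q N = q\<close> \<open>min q (Suc N) = q\<close>
        by (simp add: algebra_simps)
    qed
  qed
  finally show ?case .
qed

lemma C_ge:
  assumes "a \<ge> 3" and "m \<ge> 2 * a^2 - a + 2"
  shows "m - 1 \<le> C m a"
proof -
  have "a * a \<le> m - 1"
  proof -
    have "a \<le> a * a" by simp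
    then have "a * a \<le> 2 * (a * a) - a" by linarith
    then have "a * a \<le> 2 * a^2 - a" by (simp add: power2_eq_square)
    then show ?thesis using assms(2) by linarith
  qed
  then have h1: "real a \<le> real (m - 1) / real a"
    using assms(1) by (simp add: field_simps, metis of_nat_le_iff of_nat_mult)
  have h2: "real a \<le> real (ceil_div (m - 1) a)"
  proof -
    have "real a \<le> of_int \<lceil>real (m - 1) / real a\<rceil>"
      using h1 le_of_int_ceiling order_trans by blast
    then show ?thesis unfolding ceil_div_def by linarith
  qed
  have "real (m - 1) = real (m - 1) / real a * real a" using assms(1) by simp
  also have "\<dots> \<le> real (m - 1) / real a * real (ceil_div (m - 1) a)"
    using h2 by (intro mult_left_mono) auto
  finally have "real (m - 1) \<le> of_int \<lceil>real (m - 1) / real a * real (ceil_div (m - 1) a)\<rceil>"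
    using le_of_int_ceiling order_trans by blast
  then show ?thesis unfolding C_def by linarith
qed

lemma red_bad:
  fixes m a d :: nat and red :: "nat \<Rightarrow> bool"
  assumes a3: "a \<ge> 3" and mb: "m \<ge> 2 * a^2 - a + 2"
    and nos: "\<not> (\<exists>x. is_solution m a (C m a) x \<and> monochromatic red m x)"
    and r2: "red (a - 2)" and r1: "red (a - 1)" and d2: "d \<le> 2" and rk: "red (m - 1 - d)"
  shows False
proof -
  define k where "k = m - 1 - d"
  define s where "s = m + 1 + (a - 2) * d - 2 * a"
  have ma: "m \<ge> 2 * a + 3"
  proof -
    have "a * a \<ge> 3 * a" using a3 by simp
    then have "2 * a^2 \<ge> 6 * a" by (simp add: power2_eq_square)
    then show ?thesis using mb a3 by linarith
  qed
  have sle: "2 + s \<le> m - 1"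
  proof -
    have "(a - 2) * d \<le> (a - 2) * 2" using d2 by simp
    then show ?thesis unfolding s_def using a3 ma by linarith
  qed
  define x where "x = (\<lambda>i. if i \<le> 2 then k else if i \<le> 2 + s then a - 2 else if i = m then k else a - 1)"
  have Cg: "m - 1 \<le> C m a" using C_ge a3 mb by blast
  have "(\<Sum>i=1..m-1. x i) = (\<Sum>i=1..m-1. if i \<le> 2 then k else if i \<le> 2 + s then a - 2 else a - 1)"
    unfolding x_def by (rule sum.cong) auto
  also have "\<dots> = 2 * k + s * (a - 2) + (m - 1 - (2 + s)) * (a - 1)"
    using sle by (subst sum3) (auto simp: min_def)
  also have "\<dots> = a * k"
  proof -
    have "int (2 * k + s * (a - 2) + (m - 1 - (2 + s)) * (a - 1))
        = 2 * int k + int s * (int a - 2) + (int m - 1 - (2 + int s)) * (int a - 1)"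
      using sle a3 by (simp add: of_nat_diff)
    also have "int k = int m - 1 - int d" unfolding k_def using ma d2 by simp
    also have "int s = int m + 1 + (int a - 2) * int d - 2 * int a"
    proof -
      have "(a - 2) * d \<ge> 0" by simp
      have "int ((a - 2) * d) = (int a - 2) * int d" using a3 by (simp add: of_nat_diff)
      then show ?thesis unfolding s_def using ma by (simp add: of_nat_diff)
    qed
    finally have "int (2 * k + s * (a - 2) + (m - 1 - (2 + s)) * (a - 1))
       = int a * (int m - 1 - int d)" by (simp add: algebra_simps)
    also have "\<dots> = int (a * k)" unfolding k_def using ma d2 by (simp add: of_nat_diff)
    finally show ?thesis by linarith
  qed
  finally have eq0: "(\<Sum>i=1..m-1. x i) = a * k" .
  have "x m = k" unfolding x_def using ma sle by auto
  then have eq: "(\<Sum>i=1..m-1. x i) = a * x m" using eq0 by simp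
  have rng: "\<forall>i\<in>{1..m}. x i \<in> {1..C m a}"
    unfolding x_def k_def using Cg a3 ma d2 by auto
  have mono: "monochromatic red m x"
    unfolding monochromatic_def x_def using r1 r2 rk k_def by auto
  show False using nos eq rng mono unfolding is_solution_def by blast
qed

theorem lemma4:
  fixes m a :: nat and red :: "nat \<Rightarrow> bool"
  assumes "a \<ge> 3" and "m \<ge> 2 * a^2 - a + 2"
    and "\<not> (\<exists>x. is_solution m a (C m a) x \<and> monochromatic red m x)"
    and "red (a - 2)" and "red (a - 1)"
  shows "\<not> red (m - 1) \<and> \<not> red (m - 2) \<and> \<not> red (m - 3) \<and> red a"
proof -
  have b0: "\<not> red (m - 1)" using red_bad[OF assms, of 0] by auto
  have e1: "m - 1 - 1 = m - 2" "m - 1 - 2 = m - 3" by arith+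
  have b1: "\<not> red (m - 2)" using red_bad[OF assms, of 1] e1 by auto
  have b2: "\<not> red (m - 3)" using red_bad[OF assms, of 2] e1 by auto
  have ma: "m \<ge> 2 * a + 3"
  proof -
    have "a * a \<ge> 3 * a" using assms(1) by simp
    then have "2 * a^2 \<ge> 6 * a" by (simp add: power2_eq_square)
    then show ?thesis using assms by linarith
  qed
  have Cg: "m - 1 \<le> C m a" using C_ge assms(1,2) by blast
  have ra: "red a"
  proof (rule ccontr)
    assume na: "\<not> red a"
    define x where "x = (\<lambda>i::nat. if i = m then m - 1 else a)"
    have "(\<Sum>i=1..m-1. x i) = (\<Sum>i=1..m-1. a)" unfolding x_def by (rule sum.cong) auto
    then have eq: "(\<Sum>i=1..m-1. x i) = a * x m" unfolding x_def by simp
    have rng: "\<forall>i\<in>{1..m}. x i \<in> {1..C m a}" unfolding x_def using Cg ma assms(1) by auto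
    have mono: "monochromatic red m x" unfolding monochromatic_def x_def using na b0 by auto
    show False using assms(3) eq rng mono unfolding is_solution_def by blast
  qed
  show ?thesis using b0 b1 b2 ra by blast
qed

end
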